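(* Let $k\ge 0$ be an integer and let $L_k$ be the $k\times(k+1)$ pencil with $\lambda$ in positions $(i,i)$ and $1$ in positions $(i,i+1)$, $i=1,\dots,k$, and zeros elsewhere. Then for each $j=0,1,\dots,k+1$ there exist vector polynomials $u_1(\lambda),\dots,u_{k+1}(\lambda)\in\mathbb{C}[\lambda]^k$ and $v_1(\lambda),\dots,v_{k+1}(\lambda)\in\mathbb{C}[\lambda]^{k+1}$, all of degree at most $1$, such that $$L_k=u_1(\lambda)v_1(\lambda)^T+\cdots+u_{k+1}(\lambda)v_{k+1}(\lambda)^T$$ and $\deg u_1=\cdots=\deg u_j=\deg v_{j+1}=\cdots=\deg v_{k+1}=0$.
   Context: The degree of a vector polynomial is the maximum degree of its entries (a zero vector is regarded as having degree $0$). *)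

theory Defs
  imports "HOL-Computational_Algebra.Polynomial"
begin

text \<open>Vector polynomials in C[lambda]^n are represented as functions
  nat => complex poly, of which only the entries with index < n matter
  (0-based indexing).\<close>

definition vdeg :: "nat \<Rightarrow> (nat \<Rightarrow> complex poly) \<Rightarrow> nat" where
  "vdeg n w = Max (insert 0 ((\<lambda>r. degree (w r)) ` {..<n}))"

definition Lpencil :: "nat \<Rightarrow> nat \<Rightarrow> nat \<Rightarrow> complex poly" where
  "Lpencil k r c = (if c = r then [:0, 1:] else if c = r + 1 then 1 else 0)"

end

theory Submission
  imports Defs
begin

lemma vdeg_le: "(\<And>r. r < n \<Longrightarrow> degree (w r) \<le> d) \<Longrightarrow> vdeg n w \<le> d"
  unfolding vdeg_def by (subst Max_le_iff) auto

lemma Lpencil_deg: "degree (Lpencil k r c) \<le> Suc 0"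
  unfolding Lpencil_def by (auto simp: degree_pCons_eq_if)

theorem lemma3p7:
  fixes k j :: nat
  assumes "j \<le> k + 1"
  shows "\<exists>u v :: nat \<Rightarrow> nat \<Rightarrow> complex poly.
           (\<forall>r<k. \<forall>c<k + 1. Lpencil k r c = (\<Sum>i = 1..k + 1. u i r * v i c)) \<and>
           (\<forall>i\<in>{1..k + 1}. vdeg k (u i) \<le> 1 \<and> vdeg (k + 1) (v i) \<le> 1) \<and>
           (\<forall>i\<in>{1..j}. vdeg k (u i) = 0) \<and>
           (\<forall>i\<in>{j + 1..k + 1}. vdeg (k + 1) (v i) = 0)"
proof -
  define u :: "nat \<Rightarrow> nat \<Rightarrow> complex poly" where
    "u i r = (if i \<le> j then (if r = i - 1 then 1 else 0) else (if j \<le> r then Lpencil k r (i - 1) else 0))" for i r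
  define v :: "nat \<Rightarrow> nat \<Rightarrow> complex poly" where
    "v i c = (if i \<le> j then Lpencil k (i - 1) c else (if c = i - 1 then 1 else 0))" for i c
  have sum: "Lpencil k r c = (\<Sum>i = 1..k + 1. u i r * v i c)" if "r < k" "c < k + 1" for r c
  proof (cases "r < j")
    case True
    have "(\<Sum>i = 1..k + 1. u i r * v i c) = (\<Sum>i = 1..k + 1. if i = r + 1 then Lpencil k r c else 0)"
      by (rule sum.cong) (use True in \<open>auto simp: u_def v_def\<close>)
    also have "\<dots> = Lpencil k r c" using that by (simp add: sum.delta)
    finally show ?thesis by simp
  next
    case False
    show ?thesis
    proof (cases "j \<le> c")
      case True
      have "(\<Sum>i = 1..k + 1. u i r * v i c) = (\<Sum>i = 1..k + 1. if i = c + 1 then Lpencil k r c else 0)"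
        by (rule sum.cong) (use True False in \<open>auto simp: u_def v_def\<close>)
      also have "\<dots> = Lpencil k r c" using that by (simp add: sum.delta)
      finally show ?thesis by simp
    next
      case cj: False
      have "(\<Sum>i = 1..k + 1. u i r * v i c) = (\<Sum>i = 1..k + 1. 0)"
        by (rule sum.cong) (use cj False in \<open>auto simp: u_def v_def\<close>)
      moreover have "Lpencil k r c = 0" using cj False by (auto simp: Lpencil_def)
      ultimately show ?thesis by simp
    qed
  qed
  have d1: "vdeg k (u i) \<le> 1 \<and> vdeg (k + 1) (v i) \<le> 1" for i
    by (intro conjI vdeg_le) (auto simp: u_def v_def Lpencil_deg)
  have d2: "vdeg k (u i) = 0" if "i \<le> j" for i
    using vdeg_le[of k "u i" 0] that by (auto simp: u_def)
  have d3: "vdeg (k + 1) (v i) = 0" if "j < i" for i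
    using vdeg_le[of "k+1" "v i" 0] that by (auto simp: v_def)
  show ?thesis
    by (rule exI[of _ u], rule exI[of _ v]) (use sum d1 d2 d3 in auto)
qed

end
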